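(* The bi-immune symmetric group $G_{\mathfrak{B}}$ is closed in $(\mathrm{Sym}(\mathbb{N}), d)$ if and only if $G_{\mathfrak{B}} = \mathrm{Sym}(\mathbb{N})$.
   Context: $\mathbb{N}$ denotes the non-negative integers, and $\mathrm{Sym}(\mathbb{N})$ the group of all permutations of $\mathbb{N}$ under composition ($g \circ f$ means apply $f$ first). For $\sigma, \tau \in \mathrm{Sym}(\mathbb{N})$ let $\rho(\sigma,\tau) = 0$ if $\sigma = \tau$, and otherwise $\rho(\sigma,\tau) = 2^{-j}$ where $j$ is the least $i$ with $\sigma(i) \neq \tau(i)$; set $d(\sigma,\tau) = \max\{\rho(\sigma,\tau), \rho(\sigma^{-1},\tau^{-1})\}$, a complete metric inducing the pointwise convergence topology. For $i \in \mathbb{N}$, $\sigma_{(i)}$ is the permutation swapping $i$ and $i+1$ and fixing all other numbers. For $A \subseteq \mathbb{N}$ with increasing enumeration $a_0 < a_1 < \cdots$, define $\sigma_A(x) = \lim_{n \to \infty} (\sigma_{(a_0)} \circ \sigma_{(a_1)} \circ \cdots \circ \sigma_{(a_n)})(x)$ (eventually constant for each $x$). A set $A$ is immune if it is infinite and contains no infinite computably enumerable subset; $A$ is bi-immune if both $A$ and $\mathbb{N} - A$ are immune. For bi-immune $A$, $\sigma_A$ is a permutation of $\mathbb{N}$. The bi-immune symmetric group $G_{\mathfrak{B}}$ is the subgroup of $\mathrm{Sym}(\mathbb{N})$ generated by $\{\sigma_A : A \text{ bi-immune}\}$. *)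

theory Defs
  imports "HOL-Analysis.Analysis" "HOL-Algebra.Bij" "HOL-Algebra.Generated_Groups"
    "HOL-Library.Infinite_Set"
begin

text \<open>Partial functions of arity n are modelled as nat list => nat option; only their
values on lists of length n matter.\<close>

fun prec :: "(nat list \<Rightarrow> nat option) \<Rightarrow> (nat list \<Rightarrow> nat option) \<Rightarrow> nat list \<Rightarrow> nat option" where
  "prec f g [] = None"
| "prec f g (0 # xs) = f xs"
| "prec f g (Suc k # xs) =
     (case prec f g (k # xs) of None \<Rightarrow> None | Some r \<Rightarrow> g (k # r # xs))"

inductive partrec :: "nat \<Rightarrow> (nat list \<Rightarrow> nat option) \<Rightarrow> bool" where
  pr_zero: "partrec n (\<lambda>xs. Some 0)"
| pr_succ: "partrec 1 (\<lambda>xs. Some (Suc (xs ! 0)))"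
| pr_proj: "i < n \<Longrightarrow> partrec n (\<lambda>xs. Some (xs ! i))"
| pr_comp: "partrec m f \<Longrightarrow> length gs = m \<Longrightarrow> (\<forall>g\<in>set gs. partrec n g) \<Longrightarrow>
     partrec n (\<lambda>xs. if (\<forall>g\<in>set gs. g xs \<noteq> None)
                      then f (map (\<lambda>g. the (g xs)) gs) else None)"
| pr_prec: "partrec n f \<Longrightarrow> partrec (n + 2) g \<Longrightarrow> partrec (n + 1) (prec f g)"
| pr_mu: "partrec (n + 1) f \<Longrightarrow>
     partrec n (\<lambda>xs. if (\<exists>k. f (k # xs) = Some 0 \<and> (\<forall>j<k. f (j # xs) \<noteq> None))
                      then Some (LEAST k. f (k # xs) = Some 0 \<and> (\<forall>j<k. f (j # xs) \<noteq> None))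
                      else None)"

definition ce :: "nat set \<Rightarrow> bool" where
  "ce A \<longleftrightarrow> (\<exists>f. partrec 1 f \<and> A = {x. f [x] \<noteq> None})"

definition immune :: "nat set \<Rightarrow> bool" where
  "immune A \<longleftrightarrow> infinite A \<and> \<not> (\<exists>B. B \<subseteq> A \<and> infinite B \<and> ce B)"

definition bi_immune :: "nat set \<Rightarrow> bool" where
  "bi_immune A \<longleftrightarrow> immune A \<and> immune (UNIV - A)"

definition adj_swap :: "nat \<Rightarrow> nat \<Rightarrow> nat" where
  "adj_swap i x = (if x = i then i + 1 else if x = i + 1 then i else x)"

definition partial_sigma :: "nat set \<Rightarrow> nat \<Rightarrow> nat \<Rightarrow> nat" where
  "partial_sigma A n = foldr (\<circ>) (map (\<lambda>k. adj_swap (Infinite_Set.enumerate A k)) [0..<Suc n]) id"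

definition sigma_set :: "nat set \<Rightarrow> nat \<Rightarrow> nat" where
  "sigma_set A x = (THE y. \<exists>N. \<forall>n\<ge>N. partial_sigma A n x = y)"

definition SymN :: "(nat \<Rightarrow> nat) set" where
  "SymN = {f. bij f}"

definition rho :: "(nat \<Rightarrow> nat) \<Rightarrow> (nat \<Rightarrow> nat) \<Rightarrow> real" where
  "rho s t = (if s = t then 0 else (1/2) ^ (LEAST i. s i \<noteq> t i))"

definition dSym :: "(nat \<Rightarrow> nat) \<Rightarrow> (nat \<Rightarrow> nat) \<Rightarrow> real" where
  "dSym s t = max (rho s t) (rho (Hilbert_Choice.inv s) (Hilbert_Choice.inv t))"

definition G_B :: "(nat \<Rightarrow> nat) set" where
  "G_B = generate (BijGroup (UNIV :: nat set)) {sigma_set A | A. bi_immune A}"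

end

theory Submission
  imports Defs "HOL-Library.Countable"
begin


lemma foldr_comp_id: "foldr (\<circ>) fs g = foldr (\<circ>) fs id \<circ> g"
  by (induction fs) (auto simp: comp_assoc)

lemma ps_0: "partial_sigma A 0 = adj_swap (enumerate A 0)"
  by (simp add: partial_sigma_def)

lemma ps_Suc: "partial_sigma A (Suc n) = partial_sigma A n \<circ> adj_swap (enumerate A (Suc n))"
  unfolding partial_sigma_def
  by (subst upt_Suc) (simp add: foldr_append del: upt_Suc, subst foldr_comp_id, simp)

lemma ps_Suc2: "partial_sigma A (Suc n) = adj_swap (enumerate A 0) \<circ> partial_sigma (A - {enumerate A 0}) n"
proof (induction n)
  case 0
  then show ?case by (simp add: ps_Suc ps_0 enumerate_Suc')
next
  case (Suc n)
  then show ?case by (simp add: ps_Suc[of A "Suc n"] ps_Suc[of "A - {enumerate A 0}" n] enumerate_Suc' comp_assoc)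
qed

lemma adj_fix: "e > x \<Longrightarrow> adj_swap e x = x"
  by (simp add: adj_swap_def)

lemma adj_inv: "adj_swap i (adj_swap i x) = x"
  by (simp add: adj_swap_def)

lemma adj_bij: "bij (adj_swap i)"
  by (rule bij_betw_byWitness[where f'="adj_swap i"]) (auto simp: adj_inv)

lemma adj_le: "e \<noteq> m \<Longrightarrow> x \<le> m \<Longrightarrow> adj_swap e x \<le> m"
  by (auto simp: adj_swap_def)

lemma ps_stable: assumes "infinite A" "x \<le> n" shows "partial_sigma A n x = partial_sigma A x x"
  using assms(2)
proof (induction n rule: dec_induct)
  case (step n)
  have "Suc n \<le> enumerate A (Suc n)" using le_enumerate[OF assms(1)] .
  then show ?case using step by (simp add: ps_Suc adj_fix)
qed simp

lemma sigma_eq: assumes "infinite A" shows "sigma_set A x = partial_sigma A x x"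
  unfolding sigma_set_def
proof (rule the_equality)
  show "\<exists>N. \<forall>n\<ge>N. partial_sigma A n x = partial_sigma A x x"
    using ps_stable[OF assms] by blast
next
  fix y assume "\<exists>N. \<forall>n\<ge>N. partial_sigma A n x = y"
  then obtain N where "\<forall>n\<ge>N. partial_sigma A n x = y" by blast
  then have "partial_sigma A (max N x) x = y" by simp
  then show "y = partial_sigma A x x" using ps_stable[OF assms, of x "max N x"] by simp
qed

lemma sigma_eq2: assumes "infinite A" "x \<le> n" shows "sigma_set A x = partial_sigma A n x"
  using sigma_eq[OF assms(1), of x] ps_stable[OF assms] by simp

lemma ps_inj: "inj (partial_sigma A n)"
proof (induction n)
  case 0 then show ?case using adj_bij[THEN bij_is_inj] by (simp add: ps_0)
next
  case (Suc n) then show ?case unfolding ps_Suc by (intro inj_compose adj_bij[THEN bij_is_inj])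
qed

lemma ps_le: assumes "m \<notin> A" "infinite A" "x \<le> m" shows "partial_sigma A n x \<le> m"
  using assms(3)
proof (induction n arbitrary: x)
  case 0
  have "enumerate A 0 \<noteq> m" using enumerate_in_set[OF assms(2)] assms(1) by auto
  then show ?case using adj_le 0 by (simp add: ps_0)
next
  case (Suc n)
  have "enumerate A (Suc n) \<noteq> m" using enumerate_in_set[OF assms(2), of "Suc n"] assms(1) by auto
  then have "adj_swap (enumerate A (Suc n)) x \<le> m"
    using adj_le Suc.prems by blast
  then show ?case using Suc.IH by (simp add: ps_Suc)
qed

lemma sigma_bij: assumes "infinite A" "infinite (UNIV - A)" shows "bij (sigma_set A)"
proof (rule bijI)
  show "inj (sigma_set A)"
  proof (rule injI)
    fix x y assume "sigma_set A x = sigma_set A y"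
    then have "partial_sigma A (max x y) x = partial_sigma A (max x y) y"
      using sigma_eq2[OF assms(1), of x "max x y"] sigma_eq2[OF assms(1), of y "max x y"] by simp
    then show "x = y" using ps_inj injD by metis
  qed
  show "surj (sigma_set A)"
  proof -
    { fix y
      obtain m where m: "m \<ge> y" "m \<in> UNIV - A" using assms(2) infinite_nat_iff_unbounded_le by blast
      have eq: "\<And>x. x \<in> {..m} \<Longrightarrow> sigma_set A x = partial_sigma A m x"
        using sigma_eq2[OF assms(1)] by simp
      have "sigma_set A ` {..m} \<subseteq> {..m}"
        using eq ps_le[OF _ assms(1)] m by auto
      moreover have "inj_on (sigma_set A) {..m}"
      proof -
        have "inj_on (partial_sigma A m) {..m}" using ps_inj by (rule inj_on_subset) simp
        then show ?thesis using inj_on_cong[of "{..m}" "sigma_set A" "partial_sigma A m"] eq by blast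
      qed
      ultimately have "sigma_set A ` {..m} = {..m}" by (simp add: endo_inj_surj)
      then have "y \<in> range (sigma_set A)" using m by auto }
    then show ?thesis by auto
  qed
qed

lemma sigma_decomp: assumes "infinite A"
  shows "sigma_set A = adj_swap (enumerate A 0) \<circ> sigma_set (A - {enumerate A 0})"
proof
  fix x
  have i2: "infinite (A - {enumerate A 0})" using assms by simp
  have "sigma_set A x = partial_sigma A (Suc x) x" using sigma_eq2[OF assms] by simp
  also have "\<dots> = adj_swap (enumerate A 0) (sigma_set (A - {enumerate A 0}) x)"
    by (simp add: ps_Suc2 sigma_eq[OF i2])
  finally show "sigma_set A x = (adj_swap (enumerate A 0) \<circ> sigma_set (A - {enumerate A 0})) x" by simp
qed



lemma rho_nonneg: "0 \<le> rho s t" by (simp add: rho_def)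
lemma rho_commute: "rho s t = rho t s"
proof -
  have "(\<lambda>i. s i \<noteq> t i) = (\<lambda>i. t i \<noteq> s i)" by auto
  then show ?thesis unfolding rho_def by auto
qed

lemma rho_zero: "rho s t = 0 \<longleftrightarrow> s = t" by (simp add: rho_def)

lemma rho_ge: assumes "s k \<noteq> t k" shows "(1/2::real) ^ k \<le> rho s t"
proof -
  have "s \<noteq> t" using assms by auto
  moreover have "(LEAST i. s i \<noteq> t i) \<le> k" using assms by (rule Least_le)
  ultimately show ?thesis unfolding rho_def by (simp add: power_decreasing)
qed

lemma rho_triangle: "rho s u \<le> rho s t + rho t u"
proof (cases "s = u")
  case True then show ?thesis using rho_nonneg by (simp add: rho_def add_nonneg_nonneg)
next
  case False
  define k where "k = (LEAST i. s i \<noteq> u i)"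
  obtain j where j: "s j \<noteq> u j" using False by auto
  have sk: "s k \<noteq> u k" unfolding k_def using j by (rule LeastI)
  have e: "rho s u = (1/2)^k" using False by (simp add: rho_def k_def)
  show ?thesis
  proof (cases "s k = t k")
    case True
    then have "t k \<noteq> u k" using sk by simp
    then show ?thesis using e rho_ge[of t k u] rho_nonneg[of s t] by linarith
  next
    case False
    then show ?thesis using e rho_ge[of s k t] rho_nonneg[of t u] by linarith
  qed
qed

lemma rho_small: assumes "\<forall>i\<le>n. s i = t i" shows "rho s t \<le> (1/2::real)^(Suc n)"
proof (cases "s = t")
  case False
  then obtain j where j: "s j \<noteq> t j" by auto
  have "s (LEAST i. s i \<noteq> t i) \<noteq> t (LEAST i. s i \<noteq> t i)" using j by (rule LeastI)
  then have "Suc n \<le> (LEAST i. s i \<noteq> t i)" using assms by (meson not_less_eq_eq)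
  then have "(1/2::real)^(LEAST i. s i \<noteq> t i) \<le> (1/2)^(Suc n)" by (rule power_decreasing) auto
  then show ?thesis using False unfolding rho_def by simp
qed (simp add: rho_def)

lemma dSym_ge: "rho x y \<le> dSym x y" "rho (Hilbert_Choice.inv x) (Hilbert_Choice.inv y) \<le> dSym x y"
  by (simp_all add: dSym_def)

lemma metric_SymN: "Metric_space SymN dSym"
proof
  fix x y z :: "nat \<Rightarrow> nat"
  show "0 \<le> dSym x y" using dSym_ge(1)[of x y] rho_nonneg[of x y] by linarith
  show "dSym x y = dSym y x" by (simp add: dSym_def rho_commute)
  show "x \<in> SymN \<Longrightarrow> y \<in> SymN \<Longrightarrow> dSym x y = 0 \<longleftrightarrow> x = y"
  proof -
    have "dSym x y = 0 \<longleftrightarrow> rho x y = 0 \<and> rho (Hilbert_Choice.inv x) (Hilbert_Choice.inv y) = 0"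
    proof
      assume "dSym x y = 0" then show "rho x y = 0 \<and> rho (Hilbert_Choice.inv x) (Hilbert_Choice.inv y) = 0"
        using dSym_ge[of x y] rho_nonneg[of x y] rho_nonneg[of "Hilbert_Choice.inv x" "Hilbert_Choice.inv y"]
        by linarith
    next
      assume "rho x y = 0 \<and> rho (Hilbert_Choice.inv x) (Hilbert_Choice.inv y) = 0"
      then show "dSym x y = 0" by (simp add: dSym_def)
    qed
    then show ?thesis using rho_zero by auto
  qed
  show "dSym x z \<le> dSym x y + dSym y z"
  proof -
    have "rho x z \<le> dSym x y + dSym y z"
      using rho_triangle[of x z y] dSym_ge(1)[of x y] dSym_ge(1)[of y z] by linarith
    moreover have "rho (Hilbert_Choice.inv x) (Hilbert_Choice.inv z) \<le> dSym x y + dSym y z"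
      using rho_triangle[of "Hilbert_Choice.inv x" "Hilbert_Choice.inv z" "Hilbert_Choice.inv y"]
        dSym_ge(2)[of x y] dSym_ge(2)[of y z] by linarith
    ultimately show ?thesis unfolding dSym_def[of x z] by (rule max.boundedI)
  qed
qed



datatype code = CZ | CS | CP nat | CC code "code list" | CR code code | CM code

instance code :: countable by countable_datatype

fun eval :: "code \<Rightarrow> nat list \<Rightarrow> nat option" where
  "eval CZ = (\<lambda>xs. Some 0)"
| "eval CS = (\<lambda>xs. Some (Suc (xs ! 0)))"
| "eval (CP i) = (\<lambda>xs. Some (xs ! i))"
| "eval (CC c cs) = (\<lambda>xs. if (\<forall>g\<in>set (map eval cs). g xs \<noteq> None)
                      then eval c (map (\<lambda>g. the (g xs)) (map eval cs)) else None)"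
| "eval (CR c d) = prec (eval c) (eval d)"
| "eval (CM c) = (\<lambda>xs. if (\<exists>k. eval c (k # xs) = Some 0 \<and> (\<forall>j<k. eval c (j # xs) \<noteq> None))
                      then Some (LEAST k. eval c (k # xs) = Some 0 \<and> (\<forall>j<k. eval c (j # xs) \<noteq> None))
                      else None)"

lemma list_codes: "\<forall>g\<in>set gs. \<exists>c. g = eval c \<Longrightarrow> \<exists>cs. gs = map eval cs"
proof (induction gs)
  case Nil then show ?case by simp
next
  case (Cons g gs)
  then obtain c cs where "g = eval c" "gs = map eval cs" by auto
  then show ?case by (intro exI[of _ "c # cs"]) simp
qed

lemma partrec_code: "partrec n f \<Longrightarrow> \<exists>c. f = eval c"
proof (induction rule: partrec.induct)
  case pr_zero then show ?case by (intro exI[of _ CZ]) simp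
next
  case pr_succ then show ?case by (intro exI[of _ CS]) simp
next
  case (pr_proj i n) then show ?case by (intro exI[of _ "CP i"]) simp
next
  case (pr_comp m f gs n)
  then obtain c where c: "f = eval c" by auto
  obtain cs where cs: "gs = map eval cs" using list_codes pr_comp.IH(2) by blast
  show ?case unfolding c cs by (intro exI[of _ "CC c cs"]) simp
next
  case (pr_prec n f g)
  then obtain c d where cd: "f = eval c" "g = eval d" by auto
  show ?case unfolding cd by (intro exI[of _ "CR c d"]) simp
next
  case (pr_mu n f)
  then obtain c where c: "f = eval c" by auto
  show ?case unfolding c by (intro exI[of _ "CM c"]) simp
qed

lemma countable_ce: "countable {B. ce B}"
proof -
  have "{B. ce B} \<subseteq> (\<lambda>c. {x. eval c [x] \<noteq> None}) ` UNIV"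
    unfolding ce_def using partrec_code by blast
  then show ?thesis by (rule countable_subset) simp
qed



definition strong :: "nat set \<Rightarrow> bool" where
  "strong A \<longleftrightarrow> (\<forall>B. infinite B \<and> (ce B \<or> B = UNIV) \<longrightarrow> infinite (B \<inter> A) \<and> infinite (B - A))"

lemma strong_mod: assumes "strong A" "finite (A - A')" "finite (A' - A)" shows "strong A'"
  unfolding strong_def
proof (intro allI impI)
  fix B assume B: "infinite B \<and> (ce B \<or> B = UNIV)"
  then have i1: "infinite (B \<inter> A)" and i2: "infinite (B - A)" using assms(1) strong_def by auto
  have "B \<inter> A \<subseteq> (B \<inter> A') \<union> (A - A')" by auto
  then have "infinite (B \<inter> A')" using i1 assms(2) by (meson finite_Un finite_subset)
  moreover have "B - A \<subseteq> (B - A') \<union> (A' - A)" by auto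
  then have "infinite (B - A')" using i2 assms(3) by (meson finite_Un finite_subset)
  ultimately show "infinite (B \<inter> A') \<and> infinite (B - A')" by simp
qed

lemma strong_bi: assumes "strong A" shows "bi_immune A"
proof -
  have u: "infinite (UNIV::nat set)" by simp
  have a1: "infinite A" and a2: "infinite (UNIV - A)" using assms u unfolding strong_def by auto
  have "\<not> (\<exists>B. B \<subseteq> A \<and> infinite B \<and> ce B)"
  proof
    assume "\<exists>B. B \<subseteq> A \<and> infinite B \<and> ce B"
    then obtain B where "B \<subseteq> A" "infinite B" "ce B" by blast
    then have "infinite (B - A)" using assms unfolding strong_def by blast
    moreover have "B - A = {}" using \<open>B \<subseteq> A\<close> by blast
    ultimately show False by simp
  qed
  moreover have "\<not> (\<exists>B. B \<subseteq> UNIV - A \<and> infinite B \<and> ce B)"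
  proof
    assume "\<exists>B. B \<subseteq> UNIV - A \<and> infinite B \<and> ce B"
    then obtain B where "B \<subseteq> UNIV - A" "infinite B" "ce B" by blast
    then have "infinite (B \<inter> A)" using assms unfolding strong_def by blast
    moreover have "B \<inter> A = {}" using \<open>B \<subseteq> UNIV - A\<close> by blast
    ultimately show False by simp
  qed
  ultimately show ?thesis using a1 a2 unfolding bi_immune_def immune_def by blast
qed

definition pick :: "nat set \<Rightarrow> nat set \<Rightarrow> nat" where
  "pick B D = (SOME x. x \<in> B \<and> x \<notin> D)"

lemma pick: assumes "infinite B" "finite D" shows "pick B D \<in> B" "pick B D \<notin> D"
proof -
  have "infinite (B - D)" using assms by simp
  then obtain x where "x \<in> B - D" by (metis finite.emptyI ex_in_conv)
  then have "\<exists>x. x \<in> B \<and> x \<notin> D" by blast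
  then have "pick B D \<in> B \<and> pick B D \<notin> D" unfolding pick_def by (rule someI_ex)
  then show "pick B D \<in> B" "pick B D \<notin> D" by auto
qed

primrec st :: "(nat \<Rightarrow> nat set) \<Rightarrow> nat \<Rightarrow> nat set \<times> nat set" where
  "st g 0 = ({}, {})"
| "st g (Suc k) = (insert (pick (g k) (fst (st g k) \<union> snd (st g k))) (fst (st g k)),
     insert (pick (g k) (insert (pick (g k) (fst (st g k) \<union> snd (st g k))) (fst (st g k) \<union> snd (st g k)))) (snd (st g k)))"

definition xk where "xk g k = pick (g k) (fst (st g k) \<union> snd (st g k))"
definition yk where "yk g k = pick (g k) (insert (xk g k) (fst (st g k) \<union> snd (st g k)))"

lemma st_Suc: "st g (Suc k) = (insert (xk g k) (fst (st g k)), insert (yk g k) (snd (st g k)))"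
  by (simp add: xk_def yk_def)

declare st.simps(2)[simp del]

lemma st_finite: "finite (fst (st g k)) \<and> finite (snd (st g k))"
  by (induction k) (auto simp: st_Suc)

context fixes g :: "nat \<Rightarrow> nat set" assumes ginf: "\<And>k. infinite (g k)"
begin

lemma xk: "xk g k \<in> g k" "xk g k \<notin> fst (st g k) \<union> snd (st g k)"
  using pick[OF ginf, of "fst (st g k) \<union> snd (st g k)" k] st_finite[of g k] unfolding xk_def by auto

lemma yk: "yk g k \<in> g k" "yk g k \<notin> insert (xk g k) (fst (st g k) \<union> snd (st g k))"
  using pick[OF ginf, of "insert (xk g k) (fst (st g k) \<union> snd (st g k))" k] st_finite[of g k] unfolding yk_def by auto

lemma st_disj: "fst (st g k) \<inter> snd (st g k) = {}"
proof (induction k)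
  case (Suc k) then show ?case using xk[of k] yk[of k] by (auto simp: st_Suc)
qed simp

lemma st_mono: "k \<le> j \<Longrightarrow> fst (st g k) \<subseteq> fst (st g j) \<and> snd (st g k) \<subseteq> snd (st g j)"
proof (induction j rule: dec_induct)
  case (step n) then show ?case by (auto simp: st_Suc)
qed simp

definition AA where "AA = (\<Union>k. fst (st g k))"

lemma xk_in: "xk g k \<in> AA"
  unfolding AA_def by (rule UN_I[of "Suc k"]) (auto simp: st_Suc)

lemma yk_out: "yk g k \<notin> AA"
proof
  assume "yk g k \<in> AA"
  then obtain j where j: "yk g k \<in> fst (st g j)" unfolding AA_def by auto
  have y: "yk g k \<in> snd (st g (Suc k))" by (simp add: st_Suc)
  show False
  proof (cases "j \<le> Suc k")
    case True
    then have "yk g k \<in> fst (st g (Suc k))" using st_mono j by blast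
    then show False using y st_disj[of "Suc k"] by blast
  next
    case False
    then have "yk g k \<in> snd (st g j)" using st_mono[of "Suc k" j] y by auto
    then show False using j st_disj[of j] by blast
  qed
qed

lemma xk_inj: "inj (xk g)"
proof -
  have "xk g k \<noteq> xk g j" if "k < j" for k j
  proof -
    have "xk g k \<in> fst (st g (Suc k))" by (simp add: st_Suc)
    then have "xk g k \<in> fst (st g j)" using st_mono[of "Suc k" j] that by auto
    then show ?thesis using xk(2)[of j] by auto
  qed
  then show ?thesis by (metis injI linorder_neqE_nat)
qed

lemma yk_inj: "inj (yk g)"
proof -
  have "yk g k \<noteq> yk g j" if "k < j" for k j
  proof -
    have "yk g k \<in> snd (st g (Suc k))" by (simp add: st_Suc)
    then have "yk g k \<in> snd (st g j)" using st_mono[of "Suc k" j] that by auto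
    then show ?thesis using yk(2)[of j] by auto
  qed
  then show ?thesis by (metis injI linorder_neqE_nat)
qed

end

lemma strong_exists: "\<exists>A. strong A"
proof -
  define F where "F = {B. infinite B \<and> (ce B \<or> B = UNIV)}"
  have cF: "countable F"
    by (rule countable_subset[of _ "insert UNIV {B. ce B}"]) (auto simp: F_def countable_ce)
  have nF: "F \<noteq> {}" unfolding F_def by auto
  define f where "f = from_nat_into F"
  have rf: "range f = F" unfolding f_def using cF nF by simp
  define g where "g = (\<lambda>k. f (fst (prod_decode k)))"
  have ginf: "\<And>k. infinite (g k)" unfolding g_def using rf F_def by blast
  have "strong (AA g)"
    unfolding strong_def
  proof (intro allI impI)
    fix B assume "infinite B \<and> (ce B \<or> B = UNIV)"
    then have "B \<in> range f" using rf F_def by auto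
    then obtain i where i: "B = f i" by auto
    define e where "e = (\<lambda>t. prod_encode (i, t))"
    have ie: "inj e" unfolding e_def by (auto intro: injI dest: inj_prod_encode[THEN injD])
    have ge: "g (e t) = B" for t unfolding g_def e_def i by simp
    have "range (xk g \<circ> e) \<subseteq> B \<inter> AA g"
      using xk(1)[of g, OF ginf] xk_in[of g, OF ginf] ge by auto
    moreover have "infinite (range (xk g \<circ> e))"
      by (rule range_inj_infinite) (intro inj_compose xk_inj[of g, OF ginf] ie)
    ultimately have 1: "infinite (B \<inter> AA g)" using finite_subset by blast
    have "range (yk g \<circ> e) \<subseteq> B - AA g"
      using yk(1)[of g, OF ginf] yk_out[of g, OF ginf] ge by auto
    moreover have "infinite (range (yk g \<circ> e))"
      by (rule range_inj_infinite) (intro inj_compose yk_inj[of g, OF ginf] ie)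
    ultimately have 2: "infinite (B - AA g)" using finite_subset by blast
    show "infinite (B \<inter> AA g) \<and> infinite (B - AA g)" using 1 2 by simp
  qed
  then show ?thesis by blast
qed



abbreviation GG :: "(nat \<Rightarrow> nat) monoid" where "GG \<equiv> BijGroup (UNIV::nat set)"

lemma carrier_GG: "carrier GG = {f. bij f}"
  by (auto simp: BijGroup_def Bij_def extensional_def)

lemma mult_GG: "bij f \<Longrightarrow> bij g \<Longrightarrow> f \<otimes>\<^bsub>GG\<^esub> g = f \<circ> g"
  by (auto simp: BijGroup_def Bij_def compose_def restrict_def)

lemma one_GG: "\<one>\<^bsub>GG\<^esub> = id"
  by (auto simp: BijGroup_def restrict_def)

lemma grp: "group GG" by (rule group_BijGroup)

lemma S_sub: "{sigma_set A | A. bi_immune A} \<subseteq> carrier GG"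
  unfolding carrier_GG using sigma_bij unfolding bi_immune_def immune_def by blast

lemma sub_GB: "subgroup G_B GG"
  unfolding G_B_def by (rule group.generate_is_subgroup[OF grp S_sub])

lemma GB_bij: "h \<in> G_B \<Longrightarrow> bij h"
  using subgroup.subset[OF sub_GB] carrier_GG by blast

lemma sigma_GB: "bi_immune A \<Longrightarrow> sigma_set A \<in> G_B"
  unfolding G_B_def by (rule generate.incl) blast

lemma adj_GB: "adj_swap i \<in> G_B"
proof -
  obtain A0 where A0: "strong A0" using strong_exists by blast
  define A1 where "A1 = {a \<in> A0. i < a}"
  define A where "A = insert i A1"
  have sA1: "strong A1" by (rule strong_mod[OF A0]) (auto simp: A1_def intro: finite_subset[of _ "{..i}"])
  have sA: "strong A" by (rule strong_mod[OF A0]) (auto simp: A_def A1_def intro: finite_subset[of _ "{..i}"])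
  have bA: "bi_immune A" and bA1: "bi_immune A1" using sA sA1 strong_bi by auto
  have inf: "infinite A" using bA unfolding bi_immune_def immune_def by blast
  have e0: "enumerate A 0 = i"
    unfolding enumerate_0 A_def A1_def by (rule Least_equality) auto
  have AA1: "A - {i} = A1" unfolding A_def A1_def by auto
  have dec: "sigma_set A = adj_swap i \<circ> sigma_set A1"
    using sigma_decomp[OF inf] e0 AA1 by simp
  have c1: "sigma_set A \<in> carrier GG" and c2: "sigma_set A1 \<in> carrier GG" and c3: "adj_swap i \<in> carrier GG"
    using S_sub bA bA1 adj_bij carrier_GG by auto
  have "sigma_set A = adj_swap i \<otimes>\<^bsub>GG\<^esub> sigma_set A1"
    using dec mult_GG c2 c3 carrier_GG by simp
  then have "adj_swap i = sigma_set A \<otimes>\<^bsub>GG\<^esub> inv\<^bsub>GG\<^esub> sigma_set A1"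
    using group.inv_solve_right[OF grp c3 c1 c2] by simp
  moreover have "sigma_set A \<otimes>\<^bsub>GG\<^esub> inv\<^bsub>GG\<^esub> sigma_set A1 \<in> G_B"
    using sigma_GB[OF bA] sigma_GB[OF bA1] sub_GB
    by (simp add: subgroup.m_closed subgroup.m_inv_closed)
  ultimately show ?thesis by simp
qed

definition tr :: "nat \<Rightarrow> nat \<Rightarrow> nat \<Rightarrow> nat" where
  "tr a b x = (if x = a then b else if x = b then a else x)"

lemma tr_bij: "bij (tr a b)"
  by (rule bij_betw_byWitness[where f'="tr a b"]) (auto simp: tr_def)

lemma tr_sym: "tr a b = tr b a" by (auto simp: tr_def)

lemma GB_mult: "f \<in> G_B \<Longrightarrow> g \<in> G_B \<Longrightarrow> f \<circ> g \<in> G_B"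
  using subgroup.m_closed[OF sub_GB] mult_GG GB_bij by metis

lemma tr_GB_le: "a \<le> b \<Longrightarrow> tr a b \<in> G_B"
proof (induction b arbitrary: a)
  case 0
  then have "tr a 0 = id" by (auto simp: tr_def)
  then show ?case using subgroup.one_closed[OF sub_GB] one_GG by (simp add: id_def)
next
  case (Suc b)
  show ?case
  proof (cases "a = Suc b")
    case True
    then have "tr a (Suc b) = id" by (auto simp: tr_def)
    then show ?thesis using subgroup.one_closed[OF sub_GB] one_GG by (simp add: id_def)
  next
    case False
    show ?thesis
    proof (cases "a = b")
      case True
      then have "tr a (Suc b) = adj_swap b" by (auto simp: tr_def adj_swap_def)
      then show ?thesis using adj_GB by simp
    next
      case False
      then have ab: "a < b" using Suc.prems \<open>a \<noteq> Suc b\<close> by simp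
      have eq: "tr a (Suc b) = adj_swap b \<circ> tr a b \<circ> adj_swap b"
        using ab by (auto simp: tr_def adj_swap_def)
      show ?thesis unfolding eq
        by (rule GB_mult[OF GB_mult[OF adj_GB[of b] Suc.IH[OF less_imp_le[OF ab]]] adj_GB[of b]])
    qed
  qed
qed

lemma tr_GB: "tr a b \<in> G_B"
  using tr_GB_le tr_sym by (metis nat_le_linear)

lemma approx: assumes "bij g" "finite F" shows "\<exists>h\<in>G_B. \<forall>x\<in>F. h x = g x"
  using assms(2)
proof (induction F rule: finite_induct)
  case empty then show ?case using subgroup.one_closed[OF sub_GB] by blast
next
  case (insert x F)
  then obtain h where h: "h \<in> G_B" "\<forall>y\<in>F. h y = g y" by blast
  have bh: "bij h" using GB_bij h(1) .
  define h' where "h' = tr (h x) (g x) \<circ> h"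
  have "h' \<in> G_B" unfolding h'_def using GB_mult tr_GB h(1) by simp
  moreover have "\<forall>y\<in>insert x F. h' y = g y"
  proof
    fix y assume y: "y \<in> insert x F"
    show "h' y = g y"
    proof (cases "y = x")
      case True then show ?thesis by (simp add: h'_def tr_def)
    next
      case False
      then have yF: "y \<in> F" using y by simp
      have "h y \<noteq> h x" using bh False by (metis bij_is_inj injD)
      moreover have "g y \<noteq> g x" using assms(1) False by (metis bij_is_inj injD)
      ultimately show ?thesis using h(2) yF by (simp add: h'_def tr_def)
    qed
  qed
  ultimately show ?case by blast
qed

theorem mainTheorem9:
  shows "closedin (Metric_space.mtopology SymN dSym) G_B \<longleftrightarrow> G_B = SymN"
proof
  assume "G_B = SymN"
  then show "closedin (Metric_space.mtopology SymN dSym) G_B"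
    using closedin_topspace[of "Metric_space.mtopology SymN dSym"]
      Metric_space.topspace_mtopology[OF metric_SymN] by simp
next
  assume cl: "closedin (Metric_space.mtopology SymN dSym) G_B"
  have sub: "G_B \<subseteq> SymN" using GB_bij SymN_def by blast
  have "SymN \<subseteq> G_B"
  proof
    fix g assume gS: "g \<in> SymN"
    show "g \<in> G_B"
    proof (rule ccontr)
      assume "g \<notin> G_B"
      then obtain r where r: "r > 0" "disjnt G_B (Metric_space.mball SymN dSym g r)"
        using cl gS unfolding Metric_space.closedin_metric[OF metric_SymN] by blast
      obtain n where n: "(1/2::real)^n < r" using real_arch_pow_inv[OF r(1), of "1/2"] by auto
      have bg: "bij g" using gS unfolding SymN_def by simp
      obtain h where h: "h \<in> G_B" "\<forall>x\<in>{..n} \<union> Hilbert_Choice.inv g ` {..n}. h x = g x"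
        using approx[OF bg, of "{..n} \<union> Hilbert_Choice.inv g ` {..n}"] by auto
      have bh: "bij h" using GB_bij h(1) .
      have 1: "\<forall>i\<le>n. g i = h i" using h(2) by auto
      have 2: "\<forall>i\<le>n. Hilbert_Choice.inv g i = Hilbert_Choice.inv h i"
      proof (intro allI impI)
        fix i assume "i \<le> n"
        then have "h (Hilbert_Choice.inv g i) = g (Hilbert_Choice.inv g i)" using h(2) by auto
        also have "\<dots> = i" using bg by (simp add: bij_is_surj surj_f_inv_f)
        finally show "Hilbert_Choice.inv g i = Hilbert_Choice.inv h i"
          using bh by (metis bij_is_inj inv_f_eq)
      qed
      have le: "(1/2::real)^(Suc n) \<le> (1/2)^n" by (rule power_decreasing) auto
      have "rho g h < r" using rho_small[OF 1] le n by linarith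
      moreover have "rho (Hilbert_Choice.inv g) (Hilbert_Choice.inv h) < r" using rho_small[OF 2] le n by linarith
      ultimately have "dSym g h < r" unfolding dSym_def by simp
      then have "h \<in> Metric_space.mball SymN dSym g r"
        using gS bh Metric_space.in_mball[OF metric_SymN] unfolding SymN_def by simp
      then show False using r(2) h(1) by (auto simp: disjnt_def)
    qed
  qed
  then show "G_B = SymN" using sub by blast
qed


end
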